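(* Consider the online two-timescale algorithm described in the context, run by every device $n\in\{1,\dots,N\}$ with control parameter $V>0$ and initial queues $Q_n^0=0$. Assume there exist $\delta>0$ and a feasible policy for the original problem such that $\frac1T\mathbb{E}\{\sum_{t\in\mathcal{T}_k}E_n^t\}<\overline{E}_n-\delta$ for all frames $k$ and all $n$. Then $$\lim_{K\to\infty}\frac{1}{KN}\sum_{k=0}^{K-1}\sum_{n=1}^N\mathbb{E}\{Q_n^{kT,*}\}\le\frac{\beta_{2,\mathrm{av}}+VX_{\max,\mathrm{av}}}{\delta},$$ and $$\lim_{K\to\infty}\frac{1}{KTN}\sum_{k=0}^{K-1}\sum_{n=1}^N\sum_{t\in\mathcal{T}_k}\mathbb{E}\{X_n^{t,*}\}\le\frac{\beta_{2,\mathrm{av}}}{V}+X_{\mathrm{av}}^{\mathrm{opt}},$$ where $\beta_{2,\mathrm{av}}=\frac1N\sum_n\beta_{2,n}$, $X_{\max,\mathrm{av}}=\frac1N\sum_nX_{n,\max}$ and $X_{\mathrm{av}}^{\mathrm{opt}}=\frac1N\sum_nX_n^{\mathrm{opt}}$.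
   Context: $N$ devices; slots $t=0,1,\dots$ grouped into frames $\mathcal{T}_k=\{kT,\dots,(k+1)T-1\}$. Device $n$ chooses a freezing percentage $\gamma_n^k\in[0,1]$ per frame and a transmit power $p_n^t\in[0,\overline{P}_n]$ per slot; these determine its per-slot energy $E_n^t\in[0,E_{n,\max}]$ (computation plus communication) and success indicator $\mathbb{1}_n^t\in\{0,1\}$ (depending also on the random channel). The penalty is $X_n^t=\lambda\mathbb{1}_n^tB_n(\gamma_n^k-1)$ ($\lambda>0$, data size $B_n$), and $X_{n,\max}=\lambda B_n$. $\overline{E}_n$ is device $n$'s average energy budget. The per-device problem is to minimize $\lim_{K\to\infty}\frac1{KT}\sum_{k<K}\sum_{t\in\mathcal{T}_k}\mathbb{E}\{X_n^t\}$ subject to $\lim_{K\to\infty}\frac1{KT}\sum_{k<K}\sum_{t\in\mathcal{T}_k}\mathbb{E}\{E_n^t\}\le\overline{E}_n$, $0\le\gamma_n^k\le1$, $0\le p_n^t\le\overline{P}_n$; $X_n^{\mathrm{opt}}$ is its optimal value. Virtual queue: $Q_n^{t+1}=\max\{Q_n^t+E_n^t-\overline{E}_n,0\}$. Algorithm: at the start of each frame $k$, given $Q_n^{kT}$, device $n$ chooses $\gamma_n^k$ and its per-slot powers (per-slot powers may depend on the observed channels) to minimize $\mathbb{E}\{\sum_{t\in\mathcal{T}_k}VX_n^t+Q_n^{kT}(E_n^t-\overline{E}_n)\mid Q_n^{kT}\}$, and updates the queue every slot. Superscript $*$ denotes quantities generated by this algorithm. Constants: $\beta_{1,n}=\frac12(E_{n,\max}^2+\overline{E}_n^2)$,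 $\beta_{2,n}=\beta_{1,n}+\frac{(T-1)[(E_{n,\max}-\overline{E}_n)E_{n,\max}+\overline{E}_n^2]}{2}$. Expectations are over channel randomness. *)

theory Defs
  imports "HOL-Probability.Probability"
begin

text \<open>Channel states have type 'h and are i.i.d. over slots with
  law D; the channel sequence lives on the infinite product space chanM D.
  En g p h : per-slot energy (freezing percentage g, power p, channel h);
  Su g p h : success indicator.\<close>

definition chanM :: "'h measure \<Rightarrow> (nat \<Rightarrow> 'h) measure" where
  "chanM D = PiM UNIV (\<lambda>_. D)"

definition penalty :: "real \<Rightarrow> real \<Rightarrow> bool \<Rightarrow> real \<Rightarrow> real" where
  "penalty lam B s g = lam * (if s then 1 else 0) * B * (g - 1)"

text \<open>A per-frame decision of the online algorithm: a freezing percentage and, for each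
  slot offset j < T of the frame, a power as function of the observed channel.\<close>
type_synonym 'h decision = "real \<times> (nat \<Rightarrow> 'h \<Rightarrow> real)"

definition adm_decision ::
  "nat \<Rightarrow> real \<Rightarrow> 'h measure \<Rightarrow> (real \<Rightarrow> real \<Rightarrow> 'h \<Rightarrow> real) \<Rightarrow> (real \<Rightarrow> real \<Rightarrow> 'h \<Rightarrow> bool)
   \<Rightarrow> 'h decision \<Rightarrow> bool" where
  "adm_decision T Pb D En Su d \<longleftrightarrow>
     0 \<le> fst d \<and> fst d \<le> 1 \<and>
     (\<forall>j<T. (\<forall>h\<in>space D. 0 \<le> snd d j h \<and> snd d j h \<le> Pb) \<and>
            (\<lambda>h. En (fst d) (snd d j h) h) \<in> borel_measurable D \<and>
            (\<lambda>h. (if Su (fst d) (snd d j h) h then 1 else 0) :: real) \<in> borel_measurable D)"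

text \<open>Frame objective E{ sum_{t in frame} V X^t + q (E^t - Ebar) | Q^{kT} = q }
  (channels i.i.d., so the conditional expectation is an integral over D per slot).\<close>
definition frame_obj ::
  "nat \<Rightarrow> real \<Rightarrow> real \<Rightarrow> real \<Rightarrow> real \<Rightarrow> 'h measure \<Rightarrow> (real \<Rightarrow> real \<Rightarrow> 'h \<Rightarrow> real)
   \<Rightarrow> (real \<Rightarrow> real \<Rightarrow> 'h \<Rightarrow> bool) \<Rightarrow> real \<Rightarrow> 'h decision \<Rightarrow> real" where
  "frame_obj T V lam B Eb D En Su q d =
     (\<Sum>j<T. \<integral>h. V * penalty lam B (Su (fst d) (snd d j h) h) (fst d)
                 + q * (En (fst d) (snd d j h) h - Eb) \<partial>D)"

text \<open>alg k q is the decision taken at the start of frame k when Q^{kT} = q; it must be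
  a minimiser of the frame objective over all admissible decisions.\<close>
definition is_dpp_alg ::
  "nat \<Rightarrow> real \<Rightarrow> real \<Rightarrow> real \<Rightarrow> real \<Rightarrow> real \<Rightarrow> 'h measure \<Rightarrow> (real \<Rightarrow> real \<Rightarrow> 'h \<Rightarrow> real)
   \<Rightarrow> (real \<Rightarrow> real \<Rightarrow> 'h \<Rightarrow> bool) \<Rightarrow> (nat \<Rightarrow> real \<Rightarrow> 'h decision) \<Rightarrow> bool" where
  "is_dpp_alg T Pb V lam B Eb D En Su alg \<longleftrightarrow>
     (\<forall>k q. 0 \<le> q \<longrightarrow> adm_decision T Pb D En Su (alg k q) \<and>
        (\<forall>d. adm_decision T Pb D En Su d \<longrightarrow>
             frame_obj T V lam B Eb D En Su q (alg k q) \<le> frame_obj T V lam B Eb D En Su q d))"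

definition alg_measurable ::
  "nat \<Rightarrow> 'h measure \<Rightarrow> (real \<Rightarrow> real \<Rightarrow> 'h \<Rightarrow> real) \<Rightarrow> (real \<Rightarrow> real \<Rightarrow> 'h \<Rightarrow> bool)
   \<Rightarrow> (nat \<Rightarrow> real \<Rightarrow> 'h decision) \<Rightarrow> bool" where
  "alg_measurable T D En Su alg \<longleftrightarrow>
     (\<forall>k. (\<lambda>q. fst (alg k q)) \<in> borel_measurable borel) \<and>
     (\<forall>k j. j < T \<longrightarrow>
        (\<lambda>(q, h). En (fst (alg k q)) (snd (alg k q) j h) h) \<in> borel_measurable (borel \<Otimes>\<^sub>M D) \<and>
        (\<lambda>(q, h). (if Su (fst (alg k q)) (snd (alg k q) j h) h then 1 else 0) :: real)
            \<in> borel_measurable (borel \<Otimes>\<^sub>M D))"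

text \<open>Trajectory of the algorithm: pair (Q^t, Q^{kT}) where k = t div T is the frame of t.
  Q^0 = 0 and Q^{t+1} = max (Q^t + E^t - Ebar) 0.\<close>
fun alg_state ::
  "nat \<Rightarrow> real \<Rightarrow> (real \<Rightarrow> real \<Rightarrow> 'h \<Rightarrow> real) \<Rightarrow> (nat \<Rightarrow> real \<Rightarrow> 'h decision)
   \<Rightarrow> nat \<Rightarrow> (nat \<Rightarrow> 'h) \<Rightarrow> real \<times> real" where
  "alg_state T Eb En alg 0 \<omega> = (0, 0)"
| "alg_state T Eb En alg (Suc t) \<omega> =
     (let q = fst (alg_state T Eb En alg t \<omega>);
          qf = snd (alg_state T Eb En alg t \<omega>);
          d = alg (t div T) qf;
          q' = max (q + En (fst d) (snd d (t mod T) (\<omega> t)) (\<omega> t) - Eb) 0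
      in (q', if Suc t mod T = 0 then q' else qf))"

definition alg_Q where
  "alg_Q T Eb En alg t \<omega> = fst (alg_state T Eb En alg t \<omega>)"

definition alg_X ::
  "nat \<Rightarrow> real \<Rightarrow> (real \<Rightarrow> real \<Rightarrow> 'h \<Rightarrow> real) \<Rightarrow> (real \<Rightarrow> real \<Rightarrow> 'h \<Rightarrow> bool) \<Rightarrow> real \<Rightarrow> real
   \<Rightarrow> (nat \<Rightarrow> real \<Rightarrow> 'h decision) \<Rightarrow> nat \<Rightarrow> (nat \<Rightarrow> 'h) \<Rightarrow> real" where
  "alg_X T Eb En Su lam B alg t \<omega> =
     (let d = alg (t div T) (snd (alg_state T Eb En alg t \<omega>))
      in penalty lam B (Su (fst d) (snd d (t mod T) (\<omega> t)) (\<omega> t)) (fst d))"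

text \<open>General (causal, deterministic) policies of the original problem:
  fst pol k \<omega> = gamma^k (depends on channels of slots < kT),
  snd pol t \<omega> = p^t (depends on channels of slots \<le> t).\<close>
type_synonym 'h policy = "(nat \<Rightarrow> (nat \<Rightarrow> 'h) \<Rightarrow> real) \<times> (nat \<Rightarrow> (nat \<Rightarrow> 'h) \<Rightarrow> real)"

definition pol_E :: "nat \<Rightarrow> (real \<Rightarrow> real \<Rightarrow> 'h \<Rightarrow> real) \<Rightarrow> 'h policy \<Rightarrow> nat \<Rightarrow> (nat \<Rightarrow> 'h) \<Rightarrow> real" where
  "pol_E T En pol t \<omega> = En (fst pol (t div T) \<omega>) (snd pol t \<omega>) (\<omega> t)"

definition pol_S :: "nat \<Rightarrow> (real \<Rightarrow> real \<Rightarrow> 'h \<Rightarrow> bool) \<Rightarrow> 'h policy \<Rightarrow> nat \<Rightarrow> (nat \<Rightarrow> 'h) \<Rightarrow> bool" where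
  "pol_S T Su pol t \<omega> = Su (fst pol (t div T) \<omega>) (snd pol t \<omega>) (\<omega> t)"

definition pol_X ::
  "nat \<Rightarrow> (real \<Rightarrow> real \<Rightarrow> 'h \<Rightarrow> bool) \<Rightarrow> real \<Rightarrow> real \<Rightarrow> 'h policy \<Rightarrow> nat \<Rightarrow> (nat \<Rightarrow> 'h) \<Rightarrow> real" where
  "pol_X T Su lam B pol t \<omega> = penalty lam B (pol_S T Su pol t \<omega>) (fst pol (t div T) \<omega>)"

definition adm_policy ::
  "nat \<Rightarrow> real \<Rightarrow> 'h measure \<Rightarrow> (real \<Rightarrow> real \<Rightarrow> 'h \<Rightarrow> real) \<Rightarrow> (real \<Rightarrow> real \<Rightarrow> 'h \<Rightarrow> bool)
   \<Rightarrow> 'h policy \<Rightarrow> bool" where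
  "adm_policy T Pb D En Su pol \<longleftrightarrow>
     (\<forall>k \<omega> \<omega>'. (\<forall>s<k * T. \<omega> s = \<omega>' s) \<longrightarrow> fst pol k \<omega> = fst pol k \<omega>') \<and>
     (\<forall>t \<omega> \<omega>'. (\<forall>s\<le>t. \<omega> s = \<omega>' s) \<longrightarrow> snd pol t \<omega> = snd pol t \<omega>') \<and>
     (\<forall>k \<omega>. 0 \<le> fst pol k \<omega> \<and> fst pol k \<omega> \<le> 1) \<and>
     (\<forall>t \<omega>. 0 \<le> snd pol t \<omega> \<and> snd pol t \<omega> \<le> Pb) \<and>
     (\<forall>k. fst pol k \<in> borel_measurable (chanM D)) \<and>
     (\<forall>t. pol_E T En pol t \<in> borel_measurable (chanM D) \<and>
          (\<lambda>\<omega>. (if pol_S T Su pol t \<omega> then 1 else 0) :: real) \<in> borel_measurable (chanM D))"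

definition avg_E where
  "avg_E T D En pol K = 1 / (real K * real T) * (\<Sum>t<K * T. \<integral>\<omega>. pol_E T En pol t \<omega> \<partial>chanM D)"

definition avg_X where
  "avg_X T D Su lam B pol K = 1 / (real K * real T) * (\<Sum>t<K * T. \<integral>\<omega>. pol_X T Su lam B pol t \<omega> \<partial>chanM D)"

definition feasible_policy where
  "feasible_policy T Pb D En Su Eb pol \<longleftrightarrow>
     adm_policy T Pb D En Su pol \<and> limsup (\<lambda>K. ereal (avg_E T D En pol K)) \<le> ereal Eb"

definition X_opt where
  "X_opt T Pb D En Su Eb lam B =
     real_of_ereal (INF pol \<in> {pol. feasible_policy T Pb D En Su Eb pol}.
                      limsup (\<lambda>K. ereal (avg_X T D Su lam B pol K)))"

definition beta1 :: "real \<Rightarrow> real \<Rightarrow> real" where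
  "beta1 Emax Eb = (Emax\<^sup>2 + Eb\<^sup>2) / 2"

definition beta2 :: "nat \<Rightarrow> real \<Rightarrow> real \<Rightarrow> real" where
  "beta2 T Emax Eb = beta1 Emax Eb + (real T - 1) * ((Emax - Eb) * Emax + Eb\<^sup>2) / 2"

end

theory Submission
  imports Defs
begin

lemma space_chanM: "\<omega> \<in> space (chanM D) \<longleftrightarrow> (\<forall>i. \<omega> i \<in> space D)"
  by (auto simp: chanM_def space_PiM)

lemma prob_chanM: "prob_space D \<Longrightarrow> prob_space (chanM D)"
  unfolding chanM_def by (rule prob_space_PiM)

lemma upd_meas: "(\<lambda>(X, x). X(i := x)) \<in> measurable (chanM D \<Otimes>\<^sub>M D) (chanM D)"
proof -
  have "(\<lambda>z. (fst z)(i := snd z)) \<in> measurable (chanM D \<Otimes>\<^sub>M D) (chanM D)"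
    unfolding chanM_def by (rule measurable_fun_upd[where J=UNIV]) auto
  then show ?thesis by (simp add: case_prod_beta)
qed

lemma distr_upd:
  assumes "prob_space D"
  shows "distr (D \<Otimes>\<^sub>M chanM D) (chanM D) (\<lambda>(x, X). X(i := x)) = chanM D"
  using distr_pair_PiM_eq_PiM[of UNIV "\<lambda>_. D" i] assms unfolding chanM_def by simp

lemma replace:
  fixes f :: "(nat \<Rightarrow> 'h) \<Rightarrow> real"
  assumes D: "prob_space D" and f[measurable]: "f \<in> borel_measurable (chanM D)"
    and bnd: "\<And>\<omega>. \<omega> \<in> space (chanM D) \<Longrightarrow> \<bar>f \<omega>\<bar> \<le> c"
  shows "integrable (chanM D) (\<lambda>\<omega>. \<integral>h. f (fun_upd \<omega> i h) \<partial>D)"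
    and "(\<integral>\<omega>. (\<integral>h. f (fun_upd \<omega> i h) \<partial>D) \<partial>chanM D) = (\<integral>\<omega>. f \<omega> \<partial>chanM D)"
proof -
  interpret P: prob_space "chanM D" using prob_chanM[OF D] .
  interpret D: prob_space D by fact
  interpret PD: pair_prob_space "chanM D" D by unfold_locales
  interpret DP: pair_prob_space D "chanM D" by unfold_locales
  have m1: "(\<lambda>(X, x). X(i := x)) \<in> measurable (chanM D \<Otimes>\<^sub>M D) (chanM D)" by (rule upd_meas)
  have m2: "(\<lambda>(x, X). X(i := x)) \<in> measurable (D \<Otimes>\<^sub>M chanM D) (chanM D)"
  proof -
    have "(\<lambda>z. (snd z)(i := fst z)) \<in> measurable (D \<Otimes>\<^sub>M chanM D) (chanM D)"
      unfolding chanM_def by (rule measurable_fun_upd[where J=UNIV]) auto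
    then show ?thesis by (simp add: case_prod_beta)
  qed
  have g[measurable]: "(\<lambda>z. f ((fst z)(i := snd z))) \<in> borel_measurable (chanM D \<Otimes>\<^sub>M D)"
    using measurable_comp[OF m1 f] by (simp add: case_prod_beta o_def)
  have sp: "\<And>z. z \<in> space (chanM D \<Otimes>\<^sub>M D) \<Longrightarrow> (fst z)(i := snd z) \<in> space (chanM D)"
    by (auto simp: space_pair_measure space_chanM)
  have int: "integrable (chanM D \<Otimes>\<^sub>M D) (\<lambda>z. f ((fst z)(i := snd z)))"
    by (rule PD.P.integrable_const_bound[where B=c]) (use bnd sp in auto)
  from PD.integrable_fst'[OF int] show "integrable (chanM D) (\<lambda>\<omega>. \<integral>h. f (fun_upd \<omega> i h) \<partial>D)" by simp
  have "(\<integral>\<omega>. (\<integral>h. f (fun_upd \<omega> i h) \<partial>D) \<partial>chanM D) = integral\<^sup>L (chanM D \<Otimes>\<^sub>M D) (\<lambda>z. f ((fst z)(i := snd z)))"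
    using PD.integral_fst'[OF int] by simp
  also have "\<dots> = (\<integral>(x,y). f (y (i := x)) \<partial>(D \<Otimes>\<^sub>M chanM D))"
  proof -
    have e: "(\<lambda>z. f ((fst z)(i := snd z))) = (\<lambda>(x, y). f (x(i := y)))" by auto
    have "(\<lambda>(x,y). f (y (i := x))) \<in> borel_measurable (D \<Otimes>\<^sub>M chanM D)"
      using measurable_comp[OF m2 f] by (simp add: o_def case_prod_beta)
    from DP.integral_product_swap[OF this] show ?thesis unfolding e by simp
  qed
  also have "\<dots> = (\<integral>\<omega>. f \<omega> \<partial>distr (D \<Otimes>\<^sub>M chanM D) (chanM D) (\<lambda>(x, X). X(i := x)))"
    using integral_distr[OF m2 f] by (simp add: case_prod_beta split_beta') 
  also have "\<dots> = (\<integral>\<omega>. f \<omega> \<partial>chanM D)" by (simp add: distr_upd[OF D])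
  finally show "(\<integral>\<omega>. (\<integral>h. f (fun_upd \<omega> i h) \<partial>D) \<partial>chanM D) = (\<integral>\<omega>. f \<omega> \<partial>chanM D)" .
qed

lemma lin_helper: "(A::real) = B + C + W + U / 2 \<Longrightarrow> W \<le> M \<Longrightarrow> U \<le> E \<Longrightarrow> A - Z \<le> B - Z + C + M + E / 2"
  by linarith

lemma frame_sum: "(\<Sum>t\<in>{k * T..<Suc k * T}. f t) = (\<Sum>j<T. f (k * T + j))"
proof -
  have "{k * T..<Suc k * T} = {0 + k * T..<T + k * T}" by simp
  then have "(\<Sum>t\<in>{k * T..<Suc k * T}. f t) = (\<Sum>j\<in>{0..<T}. f (j + k * T))"
    by (simp only: sum.shift_bounds_nat_ivl)
  then show ?thesis by (simp add: atLeast0LessThan add.commute)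
qed

lemma frames_sum: "(\<Sum>k<K. \<Sum>j<T. f (k * T + j)) = (\<Sum>t<K * T. f (t::nat))"
proof (induction K)
  case 0
  then show ?case by simp
next
  case (Suc K)
  have "(\<Sum>t<Suc K * T. f t) = (\<Sum>t\<in>{0..<K * T}. f t) + (\<Sum>t\<in>{K * T..<Suc K * T}. f t)"
    by (subst sum.atLeastLessThan_concat) (auto simp: atLeast0LessThan)
  then show ?case using Suc frame_sum[of f K T] by (simp add: atLeast0LessThan)
qed

lemma alg1: "(N::real) > 0 \<Longrightarrow> (V * A + q * (B - N * E)) / N = V * (1 / N * A) + q * (1 / N * B - E)"
  by (simp add: field_simps)

lemma alg2: "(q::real) \<ge> 0 \<Longrightarrow> q * (X / (q + 1)) + X / (q + 1) = X"
proof -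
  assume "q \<ge> 0"
  then have "q + 1 \<noteq> 0" by simp
  have "q * (X / (q + 1)) + X / (q + 1) = (q + 1) * (X / (q + 1))" by (simp only: distrib_right mult_1)
  also have "\<dots> = X" using \<open>q + 1 \<noteq> 0\<close> by simp
  finally show ?thesis .
qed

lemma avg_h1:
  fixes S K N \<delta> V :: real and b c :: "nat \<Rightarrow> real"
  assumes N: "N > 0" and K: "K > 0" and d: "\<delta> > 0"
    and S: "S \<le> (\<Sum>n\<in>A. K * ((b n + V * c n) / \<delta>))"
  shows "1 / (K * N) * S \<le> ((\<Sum>n\<in>A. b n) / N + V * ((\<Sum>n\<in>A. c n) / N)) / \<delta>"
proof -
  have e: "(\<Sum>n\<in>A. K * ((b n + V * c n) / \<delta>)) = K / \<delta> * ((\<Sum>n\<in>A. b n) + V * (\<Sum>n\<in>A. c n))"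
    by (simp add: sum_distrib_left sum.distrib algebra_simps add_divide_distrib sum_divide_distrib)
  have p: "1 / (K * N) > 0" using N K by simp
  have "1 / (K * N) * S \<le> 1 / (K * N) * (K / \<delta> * ((\<Sum>n\<in>A. b n) + V * (\<Sum>n\<in>A. c n)))"
    using S e p by (intro mult_left_mono) auto
  also have "\<dots> = ((\<Sum>n\<in>A. b n) / N + V * ((\<Sum>n\<in>A. c n) / N)) / \<delta>"
    using N K d by (simp add: field_simps)
  finally show ?thesis .
qed

lemma avg_h2:
  fixes S K N T V :: real and b c :: "nat \<Rightarrow> real"
  assumes N: "N > 0" and K: "K > 0" and T: "T > 0" and V: "V > 0"
    and S: "S \<le> (\<Sum>n\<in>A. K * T * (b n / V + c n))"
  shows "1 / (K * T * N) * S \<le> (\<Sum>n\<in>A. b n) / N / V + (\<Sum>n\<in>A. c n) / N"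
proof -
  have e: "(\<Sum>n\<in>A. K * T * (b n / V + c n)) = K * T * ((\<Sum>n\<in>A. b n) / V + (\<Sum>n\<in>A. c n))"
    by (simp add: sum_distrib_left sum.distrib algebra_simps sum_divide_distrib)
  have p: "1 / (K * T * N) > 0" using N K T by simp
  have "1 / (K * T * N) * S \<le> 1 / (K * T * N) * (K * T * ((\<Sum>n\<in>A. b n) / V + (\<Sum>n\<in>A. c n)))"
    using S e p by (intro mult_left_mono) auto
  also have "\<dots> = (\<Sum>n\<in>A. b n) / N / V + (\<Sum>n\<in>A. c n) / N"
    using N K T V by (simp add: field_simps)
  finally show ?thesis .
qed

locale dev =
  fixes T :: nat and V lam \<delta> :: real and D :: "'h measure"
    and En :: "real \<Rightarrow> real \<Rightarrow> 'h \<Rightarrow> real" and Su :: "real \<Rightarrow> real \<Rightarrow> 'h \<Rightarrow> bool"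
    and B Pb Emax Eb :: real and alg :: "nat \<Rightarrow> real \<Rightarrow> 'h decision"
  assumes T: "T \<ge> 1" and V: "V > 0" and lam: "lam > 0" and \<delta>: "\<delta> > 0"
    and D: "prob_space D" and B: "B > 0" and Pb: "Pb \<ge> 0"
    and En_bound: "\<And>g p h. 0 \<le> g \<Longrightarrow> g \<le> 1 \<Longrightarrow> 0 \<le> p \<Longrightarrow> p \<le> Pb \<Longrightarrow> h \<in> space D \<Longrightarrow> 0 \<le> En g p h \<and> En g p h \<le> Emax"
    and Eb: "Eb \<ge> 0"
    and alg: "is_dpp_alg T Pb V lam B Eb D En Su alg"
    and alg_meas: "alg_measurable T D En Su alg"
begin

abbreviation "S t \<omega> \<equiv> alg_state T Eb En alg t \<omega>"
abbreviation "Q t \<omega> \<equiv> fst (S t \<omega>)"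
abbreviation "F t \<omega> \<equiv> snd (S t \<omega>)"
definition "dE k q j h = En (fst (alg k q)) (snd (alg k q) j h) h"
definition "dX k q j h = penalty lam B (Su (fst (alg k q)) (snd (alg k q) j h) h) (fst (alg k q))"

lemma Q_Suc: "Q (Suc t) \<omega> = max (Q t \<omega> + dE (t div T) (F t \<omega>) (t mod T) (\<omega> t) - Eb) 0"
  by (simp add: Let_def dE_def)

lemma F_Suc: "F (Suc t) \<omega> = (if Suc t mod T = 0 then Q (Suc t) \<omega> else F t \<omega>)"
  by (simp add: Let_def)

declare alg_state.simps(2)[simp del]

lemma Q_nonneg: "Q t \<omega> \<ge> 0"
  by (cases t) (auto simp: Q_Suc)

lemma F_eq: "F t \<omega> = Q (t div T * T) \<omega>"
proof (induction t)
  case 0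
  then show ?case by simp
next
  case (Suc t)
  show ?case
  proof (cases "Suc t mod T = 0")
    case True
    then have "Suc t div T * T = Suc t" using div_mult_mod_eq[of "Suc t" T] True by simp
    then show ?thesis using True by (simp only: F_Suc simp_thms if_True)
  next
    case False
    then have "Suc t div T = t div T" using T
      by (simp add: div_Suc mod_Suc split: if_splits)
    then show ?thesis using False Suc by (simp only: F_Suc if_False)
  qed
qed

lemma F_nonneg: "F t \<omega> \<ge> 0"
  by (simp add: F_eq Q_nonneg)

lemma alg_X_eq: "alg_X T Eb En Su lam B alg t \<omega> = dX (t div T) (F t \<omega>) (t mod T) (\<omega> t)"
  by (simp add: alg_X_def dX_def Let_def)

lemma S_local: "(\<And>s. s < t \<Longrightarrow> \<omega> s = \<omega>' s) \<Longrightarrow> S t \<omega> = S t \<omega>'"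
  by (induction t) (simp_all add: Let_def alg_state.simps)

lemma adm: "q \<ge> 0 \<Longrightarrow> adm_decision T Pb D En Su (alg k q)"
  using alg unfolding is_dpp_alg_def by blast

lemma minim: "q \<ge> 0 \<Longrightarrow> adm_decision T Pb D En Su d \<Longrightarrow>
   frame_obj T V lam B Eb D En Su q (alg k q) \<le> frame_obj T V lam B Eb D En Su q d"
  using alg unfolding is_dpp_alg_def by blast

lemma dE_bound: "q \<ge> 0 \<Longrightarrow> j < T \<Longrightarrow> h \<in> space D \<Longrightarrow> 0 \<le> dE k q j h \<and> dE k q j h \<le> Emax"
  using adm[of q k] unfolding adm_decision_def dE_def by (intro En_bound) auto

lemma penalty_bound: "0 \<le> g \<Longrightarrow> g \<le> 1 \<Longrightarrow> - (lam * B) \<le> penalty lam B s g \<and> penalty lam B s g \<le> 0"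
proof -
  assume g: "0 \<le> g" "g \<le> 1"
  have "lam * B * g \<ge> 0" "lam * B > 0" using lam B g by auto
  then show "- (lam * B) \<le> penalty lam B s g \<and> penalty lam B s g \<le> 0" using lam B g by (auto simp: penalty_def mult_nonneg_nonpos algebra_simps)
qed

lemma dX_bound: "q \<ge> 0 \<Longrightarrow> - (lam * B) \<le> dX k q j h \<and> dX k q j h \<le> 0"
  using adm[of q k] unfolding adm_decision_def dX_def by (intro penalty_bound) auto

lemma Emax_nonneg: "Emax \<ge> 0"
proof -
  interpret prob_space D by (rule D)
  obtain h where "h \<in> space D" using not_empty by blast
  then show ?thesis using En_bound[of 0 0 h] Pb by auto
qed

lemma comp_meas:
  assumes f: "f \<in> borel_measurable (chanM D)"
    and g: "g \<in> borel_measurable (borel \<Otimes>\<^sub>M D)"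
  shows "(\<lambda>\<omega>. g (f \<omega>, \<omega> i)) \<in> borel_measurable (chanM D)"
proof -
  have "(\<lambda>\<omega>. \<omega> i) \<in> measurable (chanM D) D"
    unfolding chanM_def by (rule measurable_component_singleton) simp
  then have "(\<lambda>\<omega>. (f \<omega>, \<omega> i)) \<in> measurable (chanM D) (borel \<Otimes>\<^sub>M D)"
    using f by (intro measurable_Pair) auto
  from measurable_comp[OF this g] show ?thesis by (simp add: o_def)
qed

lemma dE_meas:
  assumes f: "f \<in> borel_measurable (chanM D)" and j: "j < T"
  shows "(\<lambda>\<omega>. dE k (f \<omega>) j (\<omega> i)) \<in> borel_measurable (chanM D)"
proof -
  have "(\<lambda>(q, h). En (fst (alg k q)) (snd (alg k q) j h) h) \<in> borel_measurable (borel \<Otimes>\<^sub>M D)"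
    using alg_meas j unfolding alg_measurable_def by blast
  from comp_meas[OF f this] show ?thesis by (simp add: dE_def)
qed

lemma dX_meas:
  assumes f: "f \<in> borel_measurable (chanM D)" and j: "j < T"
  shows "(\<lambda>\<omega>. dX k (f \<omega>) j (\<omega> i)) \<in> borel_measurable (chanM D)"
proof -
  have "(\<lambda>(q, h). (if Su (fst (alg k q)) (snd (alg k q) j h) h then 1 else 0) :: real) \<in> borel_measurable (borel \<Otimes>\<^sub>M D)"
    using alg_meas j unfolding alg_measurable_def by blast
  from comp_meas[OF f this] 
  have 1: "(\<lambda>\<omega>. (if Su (fst (alg k (f \<omega>))) (snd (alg k (f \<omega>)) j (\<omega> i)) (\<omega> i) then 1 else 0) :: real) \<in> borel_measurable (chanM D)"
    by simp
  have "(\<lambda>q. fst (alg k q)) \<in> borel_measurable borel"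
    using alg_meas unfolding alg_measurable_def by blast
  from measurable_comp[OF f this] have 2: "(\<lambda>\<omega>. fst (alg k (f \<omega>))) \<in> borel_measurable (chanM D)"
    by (simp add: o_def)
  have "(\<lambda>\<omega>. dX k (f \<omega>) j (\<omega> i)) = (\<lambda>\<omega>. lam * (if Su (fst (alg k (f \<omega>))) (snd (alg k (f \<omega>)) j (\<omega> i)) (\<omega> i) then 1 else 0) * B * (fst (alg k (f \<omega>)) - 1))"
    by (simp add: dX_def penalty_def)
  also have "\<dots> \<in> borel_measurable (chanM D)"
    using 1 2 by measurable
  finally show ?thesis .
qed

lemma meas_QF: "Q t \<in> borel_measurable (chanM D) \<and> F t \<in> borel_measurable (chanM D)"
proof (induction t)
  case 0
  then show ?case by simp
next
  case (Suc t)
  then have F: "F t \<in> borel_measurable (chanM D)" and Qm: "Q t \<in> borel_measurable (chanM D)" by auto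
  have "(\<lambda>\<omega>. dE (t div T) (F t \<omega>) (t mod T) (\<omega> t)) \<in> borel_measurable (chanM D)"
    using T by (intro dE_meas[OF F]) simp
  then have "(\<lambda>\<omega>. max (Q t \<omega> + dE (t div T) (F t \<omega>) (t mod T) (\<omega> t) - Eb) 0) \<in> borel_measurable (chanM D)"
    using Qm by measurable
  then have Q': "Q (Suc t) \<in> borel_measurable (chanM D)"
    by (simp only: Q_Suc)
  show ?case
  proof (cases "Suc t mod T = 0")
    case True
    then show ?thesis using Q' by (simp only: F_Suc simp_thms if_True)
  next
    case False
    then show ?thesis using Q' F by (simp only: F_Suc if_False)
  qed
qed

lemma Q_meas[measurable]: "Q t \<in> borel_measurable (chanM D)" and F_meas[measurable]: "F t \<in> borel_measurable (chanM D)"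
  using meas_QF by auto

lemma Q_le: "\<omega> \<in> space (chanM D) \<Longrightarrow> Q t \<omega> \<le> real t * Emax"
proof (induction t)
  case 0
  then show ?case by simp
next
  case (Suc t)
  have "dE (t div T) (F t \<omega>) (t mod T) (\<omega> t) \<le> Emax"
    using dE_bound[OF F_nonneg, of "t mod T" "\<omega> t" "t div T" t \<omega>] T Suc.prems
    by (auto simp: space_chanM)
  then show ?case using Suc Emax_nonneg Eb by (simp add: Q_Suc algebra_simps)
qed

lemma Q_zero: "Emax \<le> Eb \<Longrightarrow> \<omega> \<in> space (chanM D) \<Longrightarrow> Q t \<omega> = 0"
proof (induction t)
  case 0
  then show ?case by simp
next
  case (Suc t)
  have "dE (t div T) (F t \<omega>) (t mod T) (\<omega> t) \<le> Emax"
    using dE_bound[OF F_nonneg, of "t mod T" "\<omega> t" "t div T" t \<omega>] T Suc.prems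
    by (auto simp: space_chanM)
  then show ?case using Suc by (simp add: Q_Suc)
qed

lemma frame_idx:
  assumes "m < T"
  shows "(k * T + m) div T = k" "(k * T + m) mod T = m" "F (k * T + m) \<omega> = Q (k * T) \<omega>"
proof -
  show 1: "(k * T + m) div T = k" using assms by simp
  show "(k * T + m) mod T = m" using assms by simp
  show "F (k * T + m) \<omega> = Q (k * T) \<omega>" by (simp only: F_eq 1)
qed

definition "cc = (Emax - Eb) * Emax + Eb\<^sup>2"

lemma cc_nonneg: "cc \<ge> 0"
proof -
  have "cc = (Emax - Eb)\<^sup>2 + Emax * Eb" by (simp add: cc_def power2_eq_square algebra_simps)
  also have "\<dots> \<ge> 0" using Emax_nonneg Eb by simp
  finally show ?thesis .
qed

lemma Q_step:
  assumes "m < T"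
  shows "Q (k * T + Suc m) \<omega> = max (Q (k * T + m) \<omega> + dE k (Q (k * T) \<omega>) m (\<omega> (k * T + m)) - Eb) 0"
  using Q_Suc[of "k * T + m" \<omega>] frame_idx[OF assms] by simp

lemma e_bound:
  assumes "m < T" "\<omega> \<in> space (chanM D)"
  shows "0 \<le> dE k (Q (k * T) \<omega>) m (\<omega> (k * T + m)) \<and> dE k (Q (k * T) \<omega>) m (\<omega> (k * T + m)) \<le> Emax"
  using dE_bound[OF Q_nonneg, of m] assms by (auto simp: space_chanM)

lemma incr:
  assumes "m \<le> T" "\<omega> \<in> space (chanM D)"
  shows "- (real m * Eb) \<le> Q (k * T + m) \<omega> - Q (k * T) \<omega> \<and>
         Q (k * T + m) \<omega> - Q (k * T) \<omega> \<le> real m * max (Emax - Eb) 0"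
  using assms(1)
proof (induction m)
  case 0
  then show ?case by simp
next
  case (Suc m)
  then have m: "m < T" by simp
  note IH = Suc.IH[OF less_imp_le[OF m]]
  note st = Q_step[OF m, of k \<omega>]
  note eb = e_bound[OF m assms(2), of k]
  show ?case
  proof
    have "Q (k * T + Suc m) \<omega> \<ge> Q (k * T + m) \<omega> + dE k (Q (k * T) \<omega>) m (\<omega> (k * T + m)) - Eb"
      using st by simp
    then show "- (real (Suc m) * Eb) \<le> Q (k * T + Suc m) \<omega> - Q (k * T) \<omega>"
      using IH eb by (simp add: algebra_simps)
    show "Q (k * T + Suc m) \<omega> - Q (k * T) \<omega> \<le> real (Suc m) * max (Emax - Eb) 0"
      using IH eb st Q_nonneg[of "k * T" \<omega>] by (simp add: algebra_simps max_def split: if_splits)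
  qed
qed

lemma cross:
  assumes "m < T" "\<omega> \<in> space (chanM D)"
  shows "(Q (k * T + m) \<omega> - Q (k * T) \<omega>) * (dE k (Q (k * T) \<omega>) m (\<omega> (k * T + m)) - Eb) \<le> real m * cc"
proof (cases "Emax \<le> Eb")
  case True
  then show ?thesis using Q_zero[OF True assms(2)] cc_nonneg by simp
next
  case False
  define d where "d = Q (k * T + m) \<omega> - Q (k * T) \<omega>"
  define e where "e = dE k (Q (k * T) \<omega>) m (\<omega> (k * T + m))"
  have dI: "- (real m * Eb) \<le> d" "d \<le> real m * (Emax - Eb)"
    using incr[OF less_imp_le[OF assms(1)] assms(2), of k] False unfolding d_def by auto
  have eI: "0 \<le> e" "e \<le> Emax" using e_bound[OF assms, of k] unfolding e_def by auto
  have "d * (e - Eb) \<le> real m * cc"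
  proof (cases "d \<ge> 0")
    case True
    have "d * (e - Eb) \<le> d * (Emax - Eb)" using True eI by (intro mult_left_mono) auto
    also have "\<dots> \<le> (real m * (Emax - Eb)) * (Emax - Eb)" using dI False by (intro mult_right_mono) auto
    also have "\<dots> \<le> (real m * (Emax - Eb)) * Emax" using False Eb by (intro mult_left_mono) auto
    also have "\<dots> \<le> real m * cc" unfolding cc_def by (simp add: algebra_simps)
    finally show ?thesis .
  next
    case nd: False
    have "d * (e - Eb) = (- d) * (Eb - e)" by (simp add: algebra_simps)
    also have "\<dots> \<le> (- d) * Eb" using nd eI by (intro mult_left_mono) auto
    also have "\<dots> \<le> (real m * Eb) * Eb" using dI Eb by (intro mult_right_mono) auto
    also have "\<dots> \<le> real m * cc"
    proof -
      have "Eb * real m \<le> Emax * real m" using False by (intro mult_right_mono) auto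
      then show ?thesis unfolding cc_def using False Eb Emax_nonneg
        by (simp add: algebra_simps power2_eq_square)
    qed
    finally show ?thesis .
  qed
  then show ?thesis unfolding d_def e_def .
qed

lemma drift_m:
  assumes "m \<le> T" "\<omega> \<in> space (chanM D)"
  shows "(Q (k * T + m) \<omega>)\<^sup>2 / 2 - (Q (k * T) \<omega>)\<^sup>2 / 2 \<le> real m * beta1 Emax Eb + cc * (real m * (real m - 1) / 2)
          + Q (k * T) \<omega> * (\<Sum>j<m. dE k (Q (k * T) \<omega>) j (\<omega> (k * T + j)) - Eb)"
  using assms(1)
proof (induction m)
  case 0
  then show ?case by simp
next
  case (Suc m)
  then have m: "m < T" by simp
  note IH = Suc.IH[OF less_imp_le[OF m]]
  define q0 where "q0 = Q (k * T) \<omega>"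
  define qm where "qm = Q (k * T + m) \<omega>"
  define e where "e = dE k (Q (k * T) \<omega>) m (\<omega> (k * T + m))"
  define a where "a = qm + e - Eb"
  have st: "Q (k * T + Suc m) \<omega> = max a 0" unfolding a_def qm_def e_def by (rule Q_step[OF m])
  have eI: "0 \<le> e" "e \<le> Emax" using e_bound[OF m assms(2), of k] unfolding e_def by auto
  have cr: "(qm - q0) * (e - Eb) \<le> real m * cc" using cross[OF m assms(2), of k] unfolding qm_def q0_def e_def .
  have sq: "(max a 0)\<^sup>2 \<le> a\<^sup>2" by (simp add: max_def)
  have ee: "(e - Eb)\<^sup>2 \<le> Emax\<^sup>2 + Eb\<^sup>2"
  proof -
    have "(e - Eb)\<^sup>2 = e\<^sup>2 - 2 * e * Eb + Eb\<^sup>2" by (simp add: power2_eq_square algebra_simps)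
    also have "\<dots> \<le> e\<^sup>2 + Eb\<^sup>2" using eI Eb by simp
    also have "e\<^sup>2 \<le> Emax\<^sup>2" using eI by (intro power_mono) auto
    finally show ?thesis by simp
  qed
  have a2: "a\<^sup>2 / 2 = qm\<^sup>2 / 2 + q0 * (e - Eb) + (qm - q0) * (e - Eb) + (e - Eb)\<^sup>2 / 2"
    unfolding a_def by (simp add: power2_eq_square field_simps)
  have "(Q (k * T + Suc m) \<omega>)\<^sup>2 / 2 - q0\<^sup>2 / 2 \<le> a\<^sup>2 / 2 - q0\<^sup>2 / 2" using st sq by simp
  also have "\<dots> \<le> (qm\<^sup>2 / 2 - q0\<^sup>2 / 2) + q0 * (e - Eb) + real m * cc + beta1 Emax Eb"
    unfolding beta1_def by (rule lin_helper[OF a2 cr ee])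
  also have "\<dots> \<le> (real m * beta1 Emax Eb + cc * (real m * (real m - 1) / 2)
          + q0 * (\<Sum>j<m. dE k (Q (k * T) \<omega>) j (\<omega> (k * T + j)) - Eb)) + q0 * (e - Eb) + real m * cc + beta1 Emax Eb"
    using IH unfolding qm_def q0_def by simp
  also have "\<dots> = real (Suc m) * beta1 Emax Eb + cc * (real (Suc m) * (real (Suc m) - 1) / 2)
          + q0 * (\<Sum>j<Suc m. dE k (Q (k * T) \<omega>) j (\<omega> (k * T + j)) - Eb)"
    unfolding e_def q0_def by (simp add: field_simps)
  finally show ?case unfolding q0_def .
qed

lemma drift_frame:
  assumes "\<omega> \<in> space (chanM D)"
  shows "(Q (Suc k * T) \<omega>)\<^sup>2 / 2 - (Q (k * T) \<omega>)\<^sup>2 / 2 \<le> real T * beta2 T Emax Eb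
          + Q (k * T) \<omega> * (\<Sum>j<T. dE k (Q (k * T) \<omega>) j (\<omega> (k * T + j)) - Eb)"
proof -
  have e1: "Suc k * T = k * T + T" by simp
  have e2: "real T * beta1 Emax Eb + cc * (real T * (real T - 1) / 2) = real T * beta2 T Emax Eb"
    unfolding beta2_def cc_def beta1_def by (simp add: power2_eq_square field_simps)
  have h: "(Q (k * T + T) \<omega>)\<^sup>2 / 2 - (Q (k * T) \<omega>)\<^sup>2 / 2 \<le> real T * beta1 Emax Eb + cc * (real T * (real T - 1) / 2)
          + Q (k * T) \<omega> * (\<Sum>j<T. dE k (Q (k * T) \<omega>) j (\<omega> (k * T + j)) - Eb)"
    using drift_m[OF order_refl assms, of k] .
  show ?thesis unfolding e1 using h e2 by linarith
qed

lemma Pspace: "prob_space (chanM D)" by (rule prob_chanM[OF D])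

lemma intb:
  fixes f :: "(nat \<Rightarrow> 'h) \<Rightarrow> real"
  assumes "f \<in> borel_measurable (chanM D)" "\<And>\<omega>. \<omega> \<in> space (chanM D) \<Longrightarrow> \<bar>f \<omega>\<bar> \<le> c"
  shows "integrable (chanM D) f"
proof -
  interpret P: prob_space "chanM D" by (rule Pspace)
  show ?thesis by (rule P.integrable_const_bound[where B=c]) (use assms in auto)
qed

abbreviation "Xa t \<omega> \<equiv> alg_X T Eb En Su lam B alg t \<omega>"

lemma Xa_meas[measurable]: "Xa t \<in> borel_measurable (chanM D)"
proof -
  have "(\<lambda>\<omega>. dX (t div T) (F t \<omega>) (t mod T) (\<omega> t)) \<in> borel_measurable (chanM D)"
    using T by (intro dX_meas) auto
  then show ?thesis by (simp add: alg_X_eq)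
qed

lemma Xa_bound: "- (lam * B) \<le> Xa t \<omega> \<and> Xa t \<omega> \<le> 0"
  unfolding alg_X_eq by (rule dX_bound[OF F_nonneg])

lemma Xa_int: "integrable (chanM D) (Xa t)"
proof (rule intb[where c="lam * B"])
  fix \<omega> show "\<bar>Xa t \<omega>\<bar> \<le> lam * B" using Xa_bound[of t \<omega>] by linarith
qed simp

lemma Q2_int: "integrable (chanM D) (\<lambda>\<omega>. (Q t \<omega>)\<^sup>2 / 2)"
proof (rule intb[where c="(real t * Emax)\<^sup>2 / 2"])
  fix \<omega> assume "\<omega> \<in> space (chanM D)"
  then have "(Q t \<omega>)\<^sup>2 \<le> (real t * Emax)\<^sup>2" using Q_le Q_nonneg by (intro power_mono) auto
  then show "\<bar>(Q t \<omega>)\<^sup>2 / 2\<bar> \<le> (real t * Emax)\<^sup>2 / 2" by simp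
qed measurable

lemma Q_int: "integrable (chanM D) (Q t)"
  by (rule intb[where c="real t * Emax"]) (use Q_le Q_nonneg in auto)

lemma upd_space: "\<omega> \<in> space (chanM D) \<Longrightarrow> h \<in> space D \<Longrightarrow> (fun_upd \<omega> (i) h) \<in> space (chanM D)"
  by (auto simp: space_chanM)

lemma frame_ineq:
  "(\<integral>\<omega>. (Q (Suc k * T) \<omega>)\<^sup>2 / 2 \<partial>chanM D) - (\<integral>\<omega>. (Q (k * T) \<omega>)\<^sup>2 / 2 \<partial>chanM D)
     + V * (\<Sum>j<T. \<integral>\<omega>. Xa (k * T + j) \<omega> \<partial>chanM D)
   \<le> real T * beta2 T Emax Eb + (\<integral>\<omega>. frame_obj T V lam B Eb D En Su (Q (k * T) \<omega>) (alg k (Q (k * T) \<omega>)) \<partial>chanM D)"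
  (is "?L \<le> _")
  and frame_int: "integrable (chanM D) (\<lambda>\<omega>. frame_obj T V lam B Eb D En Su (Q (k * T) \<omega>) (alg k (Q (k * T) \<omega>)))"
proof -
  interpret P: prob_space "chanM D" by (rule Pspace)
  define q0 where "q0 \<omega> = Q (k * T) \<omega>" for \<omega>
  define Psi where "Psi j \<omega> = V * Xa (k * T + j) \<omega> + q0 \<omega> * (dE k (q0 \<omega>) j (\<omega> (k * T + j)) - Eb)" for j \<omega>
  define G where "G j \<omega> = (\<integral>h. V * dX k (q0 \<omega>) j h + q0 \<omega> * (dE k (q0 \<omega>) j h - Eb) \<partial>D)" for j \<omega>
  have q0e: "q0 = (\<lambda>\<omega>. Q (k * T) \<omega>)" by (rule ext) (simp add: q0_def)
  have q0m[measurable]: "q0 \<in> borel_measurable (chanM D)" unfolding q0e by simp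
  have Psi_m: "Psi j \<in> borel_measurable (chanM D)" if "j < T" for j
  proof -
    have "(\<lambda>\<omega>. dE k (q0 \<omega>) j (\<omega> (k * T + j))) \<in> borel_measurable (chanM D)"
      by (rule dE_meas[OF q0m that])
    then show ?thesis unfolding Psi_def by measurable
  qed
  have Psi_b: "\<bar>Psi j \<omega>\<bar> \<le> V * (lam * B) + real (k * T) * Emax * (Emax + Eb)"
    if "j < T" "\<omega> \<in> space (chanM D)" for j \<omega>
  proof -
    have X: "\<bar>Xa (k * T + j) \<omega>\<bar> \<le> lam * B" using Xa_bound[of "k * T + j" \<omega>] by auto
    have q: "0 \<le> q0 \<omega>" "q0 \<omega> \<le> real (k * T) * Emax" using Q_le[OF that(2), of "k * T"] Q_nonneg[of "k * T" \<omega>] unfolding q0_def by auto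
    have e: "\<bar>dE k (q0 \<omega>) j (\<omega> (k * T + j)) - Eb\<bar> \<le> Emax + Eb"
      using dE_bound[OF q(1) that(1), of "\<omega> (k * T + j)" k] that(2) Eb by (auto simp: space_chanM)
    have "\<bar>q0 \<omega> * (dE k (q0 \<omega>) j (\<omega> (k * T + j)) - Eb)\<bar> \<le> real (k * T) * Emax * (Emax + Eb)"
      unfolding abs_mult using q e by (intro mult_mono) auto
    moreover have "\<bar>V * Xa (k * T + j) \<omega>\<bar> \<le> V * (lam * B)" using X V by (simp add: abs_mult)
    ultimately show ?thesis unfolding Psi_def by linarith
  qed
  have upd: "Psi j ((fun_upd \<omega> (k * T + j) h)) = V * dX k (q0 \<omega>) j h + q0 \<omega> * (dE k (q0 \<omega>) j h - Eb)"
    if "j < T" for j \<omega> h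
  proof -
    have S1: "S (k * T + j) ((fun_upd \<omega> (k * T + j) h)) = S (k * T + j) \<omega>" by (rule S_local) simp
    have S2: "S (k * T) ((fun_upd \<omega> (k * T + j) h)) = S (k * T) \<omega>" by (rule S_local) simp
    have "Xa (k * T + j) ((fun_upd \<omega> (k * T + j) h)) = dX k (q0 \<omega>) j h"
      unfolding alg_X_eq frame_idx[OF that] S1 S2 q0_def by simp
    then show ?thesis unfolding Psi_def q0_def S2 by simp
  qed
  have Gint: "integrable (chanM D) (G j)" and Geq: "(\<integral>\<omega>. G j \<omega> \<partial>chanM D) = (\<integral>\<omega>. Psi j \<omega> \<partial>chanM D)"
    if "j < T" for j
  proof -
    note R = replace[OF D Psi_m[OF that] Psi_b[OF that], of "k * T + j"]
    have "G j = (\<lambda>\<omega>. \<integral>h. Psi j ((fun_upd \<omega> (k * T + j) h)) \<partial>D)"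
      unfolding G_def upd[OF that] by simp
    then show "integrable (chanM D) (G j)" "(\<integral>\<omega>. G j \<omega> \<partial>chanM D) = (\<integral>\<omega>. Psi j \<omega> \<partial>chanM D)"
      using R by simp_all
  qed
  have Psi_int: "integrable (chanM D) (Psi j)" if "j < T" for j
    by (rule intb[OF Psi_m[OF that] Psi_b[OF that]])
  have fo: "frame_obj T V lam B Eb D En Su (q0 \<omega>) (alg k (q0 \<omega>)) = (\<Sum>j<T. G j \<omega>)" for \<omega>
    unfolding frame_obj_def G_def dX_def dE_def by simp
  have "integrable (chanM D) (\<lambda>\<omega>. \<Sum>j<T. G j \<omega>)" using Gint by auto
  then show "integrable (chanM D) (\<lambda>\<omega>. frame_obj T V lam B Eb D En Su (Q (k * T) \<omega>) (alg k (Q (k * T) \<omega>)))"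
    using fo by (simp add: q0_def[symmetric])
  have pw: "(Q (Suc k * T) \<omega>)\<^sup>2 / 2 - (Q (k * T) \<omega>)\<^sup>2 / 2 + V * (\<Sum>j<T. Xa (k * T + j) \<omega>)
      \<le> real T * beta2 T Emax Eb + (\<Sum>j<T. Psi j \<omega>)" if "\<omega> \<in> space (chanM D)" for \<omega>
  proof -
    have "(\<Sum>j<T. Psi j \<omega>) = V * (\<Sum>j<T. Xa (k * T + j) \<omega>) + q0 \<omega> * (\<Sum>j<T. dE k (q0 \<omega>) j (\<omega> (k * T + j)) - Eb)"
      unfolding Psi_def sum.distrib sum_distrib_left ..
    then show ?thesis using drift_frame[OF that, of k] unfolding q0_def by simp
  qed
  have "?L = (\<integral>\<omega>. (Q (Suc k * T) \<omega>)\<^sup>2 / 2 - (Q (k * T) \<omega>)\<^sup>2 / 2 + V * (\<Sum>j<T. Xa (k * T + j) \<omega>) \<partial>chanM D)"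
    using Q2_int Xa_int by (simp add: integral_sum)
  also have "\<dots> \<le> (\<integral>\<omega>. real T * beta2 T Emax Eb + (\<Sum>j<T. Psi j \<omega>) \<partial>chanM D)"
  proof (rule integral_mono)
    show "integrable (chanM D) (\<lambda>\<omega>. real T * beta2 T Emax Eb + (\<Sum>j<T. Psi j \<omega>))"
      by (rule Bochner_Integration.integrable_add[OF P.integrable_const]) (use Psi_int in auto)
  qed (use pw Q2_int Xa_int in auto)
  also have "\<dots> = real T * beta2 T Emax Eb + (\<Sum>j<T. \<integral>\<omega>. Psi j \<omega> \<partial>chanM D)"
    using Psi_int by (subst Bochner_Integration.integral_add) (auto simp: integral_sum P.prob_space)
  also have "\<dots> = real T * beta2 T Emax Eb + (\<Sum>j<T. \<integral>\<omega>. G j \<omega> \<partial>chanM D)"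
    using Geq by simp
  also have "\<dots> = real T * beta2 T Emax Eb + (\<integral>\<omega>. frame_obj T V lam B Eb D En Su (Q (k * T) \<omega>) (alg k (Q (k * T) \<omega>)) \<partial>chanM D)"
    using Gint by (simp add: fo integral_sum q0_def[symmetric])
  finally show "?L \<le> real T * beta2 T Emax Eb + (\<integral>\<omega>. frame_obj T V lam B Eb D En Su (Q (k * T) \<omega>) (alg k (Q (k * T) \<omega>)) \<partial>chanM D)" .
qed

lemma upd_meas1: "\<omega> \<in> space (chanM D) \<Longrightarrow> (\<lambda>h. fun_upd \<omega> i h) \<in> measurable D (chanM D)"
  unfolding chanM_def by (rule measurable_fun_upd[where J=UNIV]) (auto simp: chanM_def)

lemma pol_X_alt: "pol_X T Su lam B pol t \<omega> = lam * (if pol_S T Su pol t \<omega> then 1 else 0) * B * (fst pol (t div T) \<omega> - 1)"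
  by (simp add: pol_X_def penalty_def)

lemma pol_facts:
  assumes pol: "adm_policy T Pb D En Su pol"
  shows pol_X_meas: "pol_X T Su lam B pol t \<in> borel_measurable (chanM D)"
    and pol_E_meas: "pol_E T En pol t \<in> borel_measurable (chanM D)"
    and pol_X_bnd: "- (lam * B) \<le> pol_X T Su lam B pol t \<omega> \<and> pol_X T Su lam B pol t \<omega> \<le> 0"
    and pol_E_bnd: "\<omega> \<in> space (chanM D) \<Longrightarrow> 0 \<le> pol_E T En pol t \<omega> \<and> pol_E T En pol t \<omega> \<le> Emax"
proof -
  have a: "\<forall>k \<omega>. 0 \<le> fst pol k \<omega> \<and> fst pol k \<omega> \<le> 1" "\<forall>t \<omega>. 0 \<le> snd pol t \<omega> \<and> snd pol t \<omega> \<le> Pb"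
    "fst pol (t div T) \<in> borel_measurable (chanM D)" "pol_E T En pol t \<in> borel_measurable (chanM D)"
    "(\<lambda>\<omega>. (if pol_S T Su pol t \<omega> then 1 else 0) :: real) \<in> borel_measurable (chanM D)"
    using pol unfolding adm_policy_def by auto
  show "pol_E T En pol t \<in> borel_measurable (chanM D)" by (rule a(4))
  have "(\<lambda>\<omega>. lam * (if pol_S T Su pol t \<omega> then 1 else 0) * B * (fst pol (t div T) \<omega> - 1)) \<in> borel_measurable (chanM D)"
    using a(3,5) by measurable
  then show "pol_X T Su lam B pol t \<in> borel_measurable (chanM D)" unfolding pol_X_alt[abs_def] .
  show "- (lam * B) \<le> pol_X T Su lam B pol t \<omega> \<and> pol_X T Su lam B pol t \<omega> \<le> 0"
    unfolding pol_X_def using a(1) by (intro penalty_bound) auto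
  assume "\<omega> \<in> space (chanM D)"
  then show "0 \<le> pol_E T En pol t \<omega> \<and> pol_E T En pol t \<omega> \<le> Emax"
    unfolding pol_E_def using a(1,2) by (intro En_bound) (auto simp: space_chanM)
qed

lemma pol_cmp:
  assumes pol: "adm_policy T Pb D En Su pol" and q: "q \<ge> 0"
  shows "frame_obj T V lam B Eb D En Su q (alg k q) \<le>
    (\<Sum>j<T. \<integral>\<omega>. V * pol_X T Su lam B pol (k' * T + j) \<omega> + q * (pol_E T En pol (k' * T + j) \<omega> - Eb) \<partial>chanM D)"
proof -
  interpret P: prob_space "chanM D" by (rule Pspace)
  define phi where "phi j \<omega> = V * pol_X T Su lam B pol (k' * T + j) \<omega> + q * (pol_E T En pol (k' * T + j) \<omega> - Eb)" for j \<omega>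
  have phi_m: "phi j \<in> borel_measurable (chanM D)" for j
    using pol_X_meas[OF pol] pol_E_meas[OF pol] unfolding phi_def[abs_def] by measurable
  have phi_b: "\<bar>phi j \<omega>\<bar> \<le> V * (lam * B) + q * (Emax + Eb)" if "\<omega> \<in> space (chanM D)" for j \<omega>
  proof -
    have X: "\<bar>pol_X T Su lam B pol (k' * T + j) \<omega>\<bar> \<le> lam * B" using pol_X_bnd[OF pol, of "k' * T + j" \<omega>] by linarith
    have E: "\<bar>pol_E T En pol (k' * T + j) \<omega> - Eb\<bar> \<le> Emax + Eb" using pol_E_bnd[OF pol that, of "k' * T + j"] Eb by linarith
    have "\<bar>q * (pol_E T En pol (k' * T + j) \<omega> - Eb)\<bar> \<le> q * (Emax + Eb)" unfolding abs_mult using q E by (intro mult_mono) auto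
    moreover have "\<bar>V * pol_X T Su lam B pol (k' * T + j) \<omega>\<bar> \<le> V * (lam * B)" using X V by (simp add: abs_mult)
    ultimately show ?thesis unfolding phi_def by linarith
  qed
  have caus1: "\<forall>k \<omega> \<omega>'. (\<forall>s<k * T. \<omega> s = \<omega>' s) \<longrightarrow> fst pol k \<omega> = fst pol k \<omega>'"
    and pb1: "\<forall>k \<omega>. 0 \<le> fst pol k \<omega> \<and> fst pol k \<omega> \<le> 1" and pb2: "\<forall>t \<omega>. 0 \<le> snd pol t \<omega> \<and> snd pol t \<omega> \<le> Pb"
    and pm: "\<forall>t. pol_E T En pol t \<in> borel_measurable (chanM D) \<and>
          (\<lambda>\<omega>. (if pol_S T Su pol t \<omega> then 1 else 0) :: real) \<in> borel_measurable (chanM D)"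
    using pol unfolding adm_policy_def by auto
  have pw: "frame_obj T V lam B Eb D En Su q (alg k q) \<le> (\<Sum>j<T. \<integral>h. phi j (fun_upd \<omega> (k' * T + j) h) \<partial>D)"
    if om: "\<omega> \<in> space (chanM D)" for \<omega>
  proof -
    define d :: "'h decision" where "d = (fst pol k' \<omega>, \<lambda>j h. snd pol (k' * T + j) (fun_upd \<omega> (k' * T + j) h))"
    have fst_upd: "fst pol ((k' * T + j) div T) (fun_upd \<omega> (k' * T + j) h) = fst d" if "j < T" for j h
    proof -
      have "(k' * T + j) div T = k'" using that by simp
      moreover have "fst pol k' (fun_upd \<omega> (k' * T + j) h) = fst pol k' \<omega>" using caus1 by auto
      ultimately show ?thesis unfolding d_def by simp
    qed
    have Eeq: "pol_E T En pol (k' * T + j) (fun_upd \<omega> (k' * T + j) h) = En (fst d) (snd d j h) h" if "j < T" for j h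
      unfolding pol_E_def fst_upd[OF that] by (simp add: d_def)
    have Seq: "pol_S T Su pol (k' * T + j) (fun_upd \<omega> (k' * T + j) h) = Su (fst d) (snd d j h) h" if "j < T" for j h
      unfolding pol_S_def fst_upd[OF that] by (simp add: d_def)
    have Xeq: "pol_X T Su lam B pol (k' * T + j) (fun_upd \<omega> (k' * T + j) h) = penalty lam B (Su (fst d) (snd d j h) h) (fst d)" if "j < T" for j h
      unfolding pol_X_def Seq[OF that] fst_upd[OF that] ..
    have admd: "adm_decision T Pb D En Su d"
      unfolding adm_decision_def
    proof (intro conjI allI impI ballI)
      show "0 \<le> fst d" "fst d \<le> 1" using pb1 by (auto simp: d_def)
      fix j assume j: "j < T"
      have um: "(\<lambda>h. fun_upd \<omega> (k' * T + j) h) \<in> measurable D (chanM D)" by (rule upd_meas1[OF om])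
      fix h assume "h \<in> space D"
      show "0 \<le> snd d j h" "snd d j h \<le> Pb" using pb2 by (auto simp: d_def)
    next
      fix j assume j: "j < T"
      have um: "(\<lambda>h. fun_upd \<omega> (k' * T + j) h) \<in> measurable D (chanM D)" by (rule upd_meas1[OF om])
      have "(\<lambda>h. pol_E T En pol (k' * T + j) (fun_upd \<omega> (k' * T + j) h)) \<in> borel_measurable D"
        using measurable_comp[OF um, of "pol_E T En pol (k' * T + j)" borel] pm by (simp add: o_def)
      then show "(\<lambda>h. En (fst d) (snd d j h) h) \<in> borel_measurable D" using Eeq[OF j] by simp
      have "(\<lambda>h. (if pol_S T Su pol (k' * T + j) (fun_upd \<omega> (k' * T + j) h) then 1 else 0) :: real) \<in> borel_measurable D"
        using measurable_comp[OF um, of "\<lambda>\<omega>. (if pol_S T Su pol (k' * T + j) \<omega> then 1 else 0) :: real" borel] pm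
        by (simp add: o_def)
      then show "(\<lambda>h. (if Su (fst d) (snd d j h) h then 1 else 0) :: real) \<in> borel_measurable D" using Seq[OF j] by simp
    qed
    have "frame_obj T V lam B Eb D En Su q (alg k q) \<le> frame_obj T V lam B Eb D En Su q d"
      by (rule minim[OF q admd])
    also have "\<dots> = (\<Sum>j<T. \<integral>h. phi j (fun_upd \<omega> (k' * T + j) h) \<partial>D)"
      unfolding frame_obj_def phi_def by (intro sum.cong refl integral_cong) (simp_all add: Xeq Eeq)
    finally show ?thesis .
  qed
  note R = replace[OF D phi_m phi_b]
  have "frame_obj T V lam B Eb D En Su q (alg k q) = (\<integral>\<omega>. frame_obj T V lam B Eb D En Su q (alg k q) \<partial>chanM D)"
    by (simp add: P.prob_space)
  also have "\<dots> \<le> (\<integral>\<omega>. (\<Sum>j<T. \<integral>h. phi j (fun_upd \<omega> (k' * T + j) h) \<partial>D) \<partial>chanM D)"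
    using pw R(1) by (intro integral_mono) auto
  also have "\<dots> = (\<Sum>j<T. \<integral>\<omega>. phi j \<omega> \<partial>chanM D)"
    using R by (simp add: integral_sum)
  finally show ?thesis unfolding phi_def .
qed

lemma pol_int:
  assumes pol: "adm_policy T Pb D En Su pol"
  shows "integrable (chanM D) (pol_X T Su lam B pol t)" "integrable (chanM D) (pol_E T En pol t)"
proof -
  show "integrable (chanM D) (pol_X T Su lam B pol t)"
  proof (rule intb[where c="lam * B", OF pol_X_meas[OF pol]])
    fix \<omega> show "\<bar>pol_X T Su lam B pol t \<omega>\<bar> \<le> lam * B" using pol_X_bnd[OF pol, of t \<omega>] by linarith
  qed
  show "integrable (chanM D) (pol_E T En pol t)"
  proof (rule intb[where c="Emax", OF pol_E_meas[OF pol]])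
    fix \<omega> assume "\<omega> \<in> space (chanM D)"
    then show "\<bar>pol_E T En pol t \<omega>\<bar> \<le> Emax" using pol_E_bnd[OF pol, of \<omega> t] by auto
  qed
qed

lemma pol_cmp2:
  assumes pol: "adm_policy T Pb D En Su pol" and q: "q \<ge> 0"
  shows "frame_obj T V lam B Eb D En Su q (alg k q) \<le>
    V * (\<Sum>j<T. \<integral>\<omega>. pol_X T Su lam B pol (k' * T + j) \<omega> \<partial>chanM D)
    + q * ((\<Sum>j<T. \<integral>\<omega>. pol_E T En pol (k' * T + j) \<omega> \<partial>chanM D) - real T * Eb)"
proof -
  interpret P: prob_space "chanM D" by (rule Pspace)
  have "(\<Sum>j<T. \<integral>\<omega>. V * pol_X T Su lam B pol (k' * T + j) \<omega> + q * (pol_E T En pol (k' * T + j) \<omega> - Eb) \<partial>chanM D)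
     = (\<Sum>j<T. V * (\<integral>\<omega>. pol_X T Su lam B pol (k' * T + j) \<omega> \<partial>chanM D) + q * ((\<integral>\<omega>. pol_E T En pol (k' * T + j) \<omega> \<partial>chanM D) - Eb))"
    using pol_int[OF pol] by (intro sum.cong refl) (simp add: P.prob_space)
  also have "\<dots> = V * (\<Sum>j<T. \<integral>\<omega>. pol_X T Su lam B pol (k' * T + j) \<omega> \<partial>chanM D)
    + q * ((\<Sum>j<T. \<integral>\<omega>. pol_E T En pol (k' * T + j) \<omega> \<partial>chanM D) - real T * Eb)"
    by (simp add: sum.distrib sum_distrib_left sum_subtractf algebra_simps)
  finally show ?thesis using pol_cmp[OF pol q, of k k'] by simp
qed

lemma pol_X_int_nonpos: "adm_policy T Pb D En Su pol \<Longrightarrow> (\<integral>\<omega>. pol_X T Su lam B pol t \<omega> \<partial>chanM D) \<le> 0"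
proof -
  assume pol: "adm_policy T Pb D En Su pol"
  have "0 \<le> (\<integral>\<omega>. - pol_X T Su lam B pol t \<omega> \<partial>chanM D)"
    by (rule Bochner_Integration.integral_nonneg) (use pol_X_bnd[OF pol] in auto)
  then show ?thesis by simp
qed

lemma slater_bound:
  assumes pol: "adm_policy T Pb D En Su pol" and q: "q \<ge> 0"
    and sl: "\<forall>k. 1 / real T * (\<Sum>t\<in>{k * T..<Suc k * T}. \<integral>\<omega>. pol_E T En pol t \<omega> \<partial>chanM D) < Eb - \<delta>"
  shows "frame_obj T V lam B Eb D En Su q (alg k q) \<le> - (q * real T * \<delta>)"
proof -
  have Tp: "real T > 0" using T by simp
  have "(\<Sum>j<T. \<integral>\<omega>. pol_E T En pol (k * T + j) \<omega> \<partial>chanM D) < real T * (Eb - \<delta>)"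
    using sl[rule_format, of k] Tp unfolding frame_sum by (simp add: field_simps)
  then have e: "q * ((\<Sum>j<T. \<integral>\<omega>. pol_E T En pol (k * T + j) \<omega> \<partial>chanM D) - real T * Eb) \<le> q * (- (real T * \<delta>))"
    using q by (intro mult_left_mono) (auto simp: algebra_simps)
  have x: "V * (\<Sum>j<T. \<integral>\<omega>. pol_X T Su lam B pol (k * T + j) \<omega> \<partial>chanM D) \<le> 0"
    using V pol_X_int_nonpos[OF pol] by (intro mult_nonneg_nonpos less_imp_le[OF V] sum_nonpos) auto
  show ?thesis using pol_cmp2[OF pol q, of k k] e x by (simp add: algebra_simps)
qed

lemma avg_key:
  assumes pol: "adm_policy T Pb D En Su pol" and q: "q \<ge> 0" and K: "K \<ge> 1"
  shows "frame_obj T V lam B Eb D En Su q (alg k q) / real T \<le>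
     V * avg_X T D Su lam B pol K + q * (avg_E T D En pol K - Eb)"
proof -
  define c where "c = frame_obj T V lam B Eb D En Su q (alg k q)"
  define a where "a t = (\<integral>\<omega>. pol_X T Su lam B pol t \<omega> \<partial>chanM D)" for t
  define b where "b t = (\<integral>\<omega>. pol_E T En pol t \<omega> \<partial>chanM D)" for t
  have each: "c \<le> V * (\<Sum>j<T. a (k' * T + j)) + q * ((\<Sum>j<T. b (k' * T + j)) - real T * Eb)" for k'
    unfolding c_def a_def b_def by (rule pol_cmp2[OF pol q])
  have "real K * c = (\<Sum>k'<K. c)" by simp
  also have "\<dots> \<le> (\<Sum>k'<K. V * (\<Sum>j<T. a (k' * T + j)) + q * ((\<Sum>j<T. b (k' * T + j)) - real T * Eb))"
    by (rule sum_mono) (rule each)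
  also have "\<dots> = V * (\<Sum>k'<K. \<Sum>j<T. a (k' * T + j)) + q * ((\<Sum>k'<K. \<Sum>j<T. b (k' * T + j)) - real K * real T * Eb)"
    by (simp add: sum.distrib sum_distrib_left sum_subtractf algebra_simps)
  also have "\<dots> = V * (\<Sum>t<K * T. a t) + q * ((\<Sum>t<K * T. b t) - real K * real T * Eb)"
    by (simp only: frames_sum)
  finally have main: "real K * c \<le> V * (\<Sum>t<K * T. a t) + q * ((\<Sum>t<K * T. b t) - real K * real T * Eb)" .
  have KT: "real K * real T > 0" using K T by simp
  have "c / real T = (real K * c) / (real K * real T)" using K by simp
  also have "\<dots> \<le> (V * (\<Sum>t<K * T. a t) + q * ((\<Sum>t<K * T. b t) - real K * real T * Eb)) / (real K * real T)"
    using main KT by (intro divide_right_mono) auto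
  also have "\<dots> = V * avg_X T D Su lam B pol K + q * (avg_E T D En pol K - Eb)"
    unfolding avg_X_def avg_E_def a_def[symmetric] b_def[symmetric]
    by (rule alg1[OF KT])
  finally show ?thesis unfolding c_def .
qed

lemma opt_cmp:
  assumes pol: "feasible_policy T Pb D En Su Eb pol" and q: "q \<ge> 0"
  shows "ereal (frame_obj T V lam B Eb D En Su q (alg k q) / (real T * V)) \<le> limsup (\<lambda>K. ereal (avg_X T D Su lam B pol K))"
proof (rule ccontr)
  define c where "c = frame_obj T V lam B Eb D En Su q (alg k q)"
  have adm: "adm_policy T Pb D En Su pol" and LE: "limsup (\<lambda>K. ereal (avg_E T D En pol K)) \<le> ereal Eb"
    using pol unfolding feasible_policy_def by auto
  assume "\<not> ?thesis"
  then have "limsup (\<lambda>K. ereal (avg_X T D Su lam B pol K)) < ereal (c / (real T * V))" unfolding c_def by simp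
  then obtain r where r1: "limsup (\<lambda>K. ereal (avg_X T D Su lam B pol K)) < ereal r" and r2: "r < c / (real T * V)"
    using ereal_dense2 by (metis less_ereal.simps(1))
  have TV: "real T * V > 0" using T V by simp
  have "r * (real T * V) < c" using r2 TV by (simp add: pos_less_divide_eq)
  then have Vr: "V * r < c / real T" using T by (simp add: pos_less_divide_eq algebra_simps)
  define \<epsilon> where "\<epsilon> = (c / real T - V * r) / (q + 1)"
  have ep: "\<epsilon> > 0" unfolding \<epsilon>_def using Vr q by simp
  have qe: "q * \<epsilon> + \<epsilon> = c / real T - V * r" unfolding \<epsilon>_def using q by (rule alg2)
  have ev1: "eventually (\<lambda>K. ereal (avg_X T D Su lam B pol K) < ereal r) sequentially"
    by (rule Limsup_lessD[OF r1])
  have "ereal Eb < ereal (Eb + \<epsilon>)" using ep by simp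
  from le_less_trans[OF LE this]
  have "limsup (\<lambda>K. ereal (avg_E T D En pol K)) < ereal (Eb + \<epsilon>)" .
  then have ev2: "eventually (\<lambda>K. ereal (avg_E T D En pol K) < ereal (Eb + \<epsilon>)) sequentially"
    by (rule Limsup_lessD)
  have ev3: "eventually (\<lambda>K. K \<ge> (1::nat)) sequentially" by (rule eventually_ge_at_top)
  from eventually_conj[OF ev1 eventually_conj[OF ev2 ev3]] obtain N where
    N: "\<forall>n\<ge>N. ereal (avg_X T D Su lam B pol n) < ereal r \<and> ereal (avg_E T D En pol n) < ereal (Eb + \<epsilon>) \<and> n \<ge> 1"
    unfolding eventually_sequentially by blast
  define K where "K = N"
  have K1: "avg_X T D Su lam B pol K < r" and K2: "avg_E T D En pol K < Eb + \<epsilon>" and K3: "K \<ge> 1"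
    using N unfolding K_def by auto
  have "c / real T \<le> V * avg_X T D Su lam B pol K + q * (avg_E T D En pol K - Eb)"
    unfolding c_def by (rule avg_key[OF adm q K3])
  also have "\<dots> < V * r + q * \<epsilon> + \<epsilon>"
  proof -
    have "V * avg_X T D Su lam B pol K < V * r" using K1 V by simp
    moreover have "q * (avg_E T D En pol K - Eb) \<le> q * \<epsilon>" using K2 q by (intro mult_left_mono) auto
    ultimately show ?thesis using ep by linarith
  qed
  also have "\<dots> = c / real T" using qe by simp
  finally show False by simp
qed

lemma avg_X_nonpos: "adm_policy T Pb D En Su pol \<Longrightarrow> avg_X T D Su lam B pol K \<le> 0"
  unfolding avg_X_def using pol_X_int_nonpos
  by (intro mult_nonneg_nonpos sum_nonpos) auto

lemma opt_bound:
  assumes ex: "\<exists>pol. feasible_policy T Pb D En Su Eb pol" and q: "q \<ge> 0"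
  shows "frame_obj T V lam B Eb D En Su q (alg k q) \<le> real T * V * X_opt T Pb D En Su Eb lam B"
proof -
  define c where "c = frame_obj T V lam B Eb D En Su q (alg k q)"
  define I where "I = (INF pol \<in> {pol. feasible_policy T Pb D En Su Eb pol}. limsup (\<lambda>K. ereal (avg_X T D Su lam B pol K)))"
  have lo: "ereal (c / (real T * V)) \<le> I" unfolding I_def c_def
    by (rule INF_greatest) (use opt_cmp q in auto)
  obtain pol0 where p0: "feasible_policy T Pb D En Su Eb pol0" using ex by blast
  have "limsup (\<lambda>K. ereal (avg_X T D Su lam B pol0 K)) \<le> ereal 0"
    using p0 avg_X_nonpos unfolding feasible_policy_def by (intro Limsup_bounded always_eventually) auto
  moreover have "I \<le> limsup (\<lambda>K. ereal (avg_X T D Su lam B pol0 K))" unfolding I_def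
    by (rule INF_lower) (simp add: p0)
  ultimately have hi: "I \<le> ereal 0" by simp
  have "c / (real T * V) \<le> real_of_ereal I"
    using lo hi by (cases I) auto
  then have "c / (real T * V) \<le> X_opt T Pb D En Su Eb lam B" unfolding X_opt_def I_def .
  moreover have "real T * V > 0" using T V by simp
  ultimately show ?thesis unfolding c_def by (simp add: pos_divide_le_eq mult.commute)
qed

lemma dev_results:
  assumes sl: "\<exists>pol. feasible_policy T Pb D En Su Eb pol \<and>
                   (\<forall>k. 1 / real T * (\<Sum>t\<in>{k * T..<Suc k * T}. \<integral>\<omega>. pol_E T En pol t \<omega> \<partial>chanM D) < Eb - \<delta>)"
  shows "(\<Sum>k<K. \<integral>\<omega>. Q (k * T) \<omega> \<partial>chanM D) \<le> real K * ((beta2 T Emax Eb + V * (lam * B)) / \<delta>)"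
    and "(\<Sum>k<K. \<Sum>t\<in>{k * T..<Suc k * T}. \<integral>\<omega>. Xa t \<omega> \<partial>chanM D)
          \<le> real K * real T * (beta2 T Emax Eb / V + X_opt T Pb D En Su Eb lam B)"
proof -
  interpret P: prob_space "chanM D" by (rule Pspace)
  obtain pol where polF: "feasible_policy T Pb D En Su Eb pol"
    and polS: "\<forall>k. 1 / real T * (\<Sum>t\<in>{k * T..<Suc k * T}. \<integral>\<omega>. pol_E T En pol t \<omega> \<partial>chanM D) < Eb - \<delta>"
    using sl by blast
  have pol: "adm_policy T Pb D En Su pol" using polF unfolding feasible_policy_def by simp
  define a where "a k = (\<integral>\<omega>. (Q (k * T) \<omega>)\<^sup>2 / 2 \<partial>chanM D)" for k
  define x where "x k = (\<Sum>j<T. \<integral>\<omega>. Xa (k * T + j) \<omega> \<partial>chanM D)" for k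
  define m where "m k = (\<integral>\<omega>. Q (k * T) \<omega> \<partial>chanM D)" for k
  define f where "f k = (\<integral>\<omega>. frame_obj T V lam B Eb D En Su (Q (k * T) \<omega>) (alg k (Q (k * T) \<omega>)) \<partial>chanM D)" for k
  define Xo where "Xo = X_opt T Pb D En Su Eb lam B"
  define b2 where "b2 = beta2 T Emax Eb"
  have Tp: "real T > 0" using T by simp
  have fr: "a (Suc k) - a k + V * x k \<le> real T * b2 + f k" for k
    using frame_ineq(1)[of k] unfolding a_def x_def f_def b2_def by simp
  have fint: "integrable (chanM D) (\<lambda>\<omega>. frame_obj T V lam B Eb D En Su (Q (k * T) \<omega>) (alg k (Q (k * T) \<omega>)))" for k
    by (rule frame_int)
  have f1: "f k \<le> - (real T * \<delta> * m k)" for k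
  proof -
    have "f k \<le> (\<integral>\<omega>. - (Q (k * T) \<omega> * real T * \<delta>) \<partial>chanM D)"
      unfolding f_def using fint Q_int
      by (intro integral_mono) (auto intro!: slater_bound[OF pol Q_nonneg polS])
    also have "\<dots> = - (real T * \<delta> * m k)" unfolding m_def by (simp add: algebra_simps)
    finally show ?thesis .
  qed
  have exF: "\<exists>pol. feasible_policy T Pb D En Su Eb pol" using polF by blast
  have f2: "f k \<le> real T * V * Xo" for k
  proof -
    have "f k \<le> (\<integral>\<omega>. real T * V * Xo \<partial>chanM D)"
      unfolding f_def Xo_def using fint
      by (intro integral_mono) (auto intro!: opt_bound[OF exF] Q_nonneg)
    also have "\<dots> = real T * V * Xo" by (simp add: P.prob_space)
    finally show ?thesis .
  qed
  have xl: "x k \<ge> - (real T * (lam * B))" for k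
  proof -
    have "(\<Sum>j<T. - (lam * B)) \<le> x k" unfolding x_def
    proof (rule sum_mono)
      fix j
      have "(\<integral>\<omega>. - (lam * B) \<partial>chanM D) \<le> (\<integral>\<omega>. Xa (k * T + j) \<omega> \<partial>chanM D)"
        using Xa_int Xa_bound by (intro integral_mono) auto
      then show "- (lam * B) \<le> (\<integral>\<omega>. Xa (k * T + j) \<omega> \<partial>chanM D)" by (simp add: P.prob_space)
    qed
    then show ?thesis by simp
  qed
  have a0: "a 0 = 0" unfolding a_def by simp
  have aK: "a K \<ge> 0" unfolding a_def by (intro Bochner_Integration.integral_nonneg) simp
  have tel: "(\<Sum>k<K. a k - a (Suc k)) = a 0 - a K" by (induction K) auto
  have s1: "real T * \<delta> * m k \<le> real T * b2 + V * (real T * (lam * B)) + (a k - a (Suc k))" for k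
  proof -
    have "V * (- (real T * (lam * B))) \<le> V * x k" using xl[of k] V by (intro mult_left_mono) auto
    then show ?thesis using fr[of k] f1[of k] by simp
  qed
  have "real T * \<delta> * (\<Sum>k<K. m k) = (\<Sum>k<K. real T * \<delta> * m k)" by (simp add: sum_distrib_left)
  also have "\<dots> \<le> (\<Sum>k<K. real T * b2 + V * (real T * (lam * B)) + (a k - a (Suc k)))" by (rule sum_mono) (rule s1)
  also have "\<dots> = real K * (real T * b2 + V * (real T * (lam * B))) + (a 0 - a K)"
    by (simp add: sum.distrib tel)
  also have "\<dots> \<le> real K * (real T * b2 + V * (real T * (lam * B)))" using a0 aK by simp
  finally have "real T * \<delta> * (\<Sum>k<K. m k) \<le> real T * (real K * (b2 + V * (lam * B)))" by (simp add: algebra_simps)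
  then have "\<delta> * (\<Sum>k<K. m k) \<le> real K * (b2 + V * (lam * B))" using Tp by (simp add: mult.assoc)
  then show "(\<Sum>k<K. \<integral>\<omega>. Q (k * T) \<omega> \<partial>chanM D) \<le> real K * ((beta2 T Emax Eb + V * (lam * B)) / \<delta>)"
    unfolding m_def b2_def using \<delta> by (simp add: pos_le_divide_eq mult.commute)
  have s2: "V * x k \<le> real T * b2 + real T * V * Xo + (a k - a (Suc k))" for k
    using fr[of k] f2[of k] by simp
  have "V * (\<Sum>k<K. x k) = (\<Sum>k<K. V * x k)" by (simp add: sum_distrib_left)
  also have "\<dots> \<le> (\<Sum>k<K. real T * b2 + real T * V * Xo + (a k - a (Suc k)))" by (rule sum_mono) (rule s2)
  also have "\<dots> = real K * (real T * b2 + real T * V * Xo) + (a 0 - a K)"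
    by (simp add: sum.distrib tel)
  also have "\<dots> \<le> real K * (real T * b2 + real T * V * Xo)" using a0 aK by simp
  also have "\<dots> = V * (real K * real T * (b2 / V + Xo))" using V by (simp add: field_simps)
  finally have "(\<Sum>k<K. x k) \<le> real K * real T * (b2 / V + Xo)" using V by simp
  then show "(\<Sum>k<K. \<Sum>t\<in>{k * T..<Suc k * T}. \<integral>\<omega>. Xa t \<omega> \<partial>chanM D)
          \<le> real K * real T * (beta2 T Emax Eb / V + X_opt T Pb D En Su Eb lam B)"
    unfolding x_def b2_def Xo_def frame_sum .
qed

end

theorem theorem3:
  fixes N T :: nat and V lam \<delta> :: real
    and D :: "nat \<Rightarrow> 'h measure"
    and En :: "nat \<Rightarrow> real \<Rightarrow> real \<Rightarrow> 'h \<Rightarrow> real"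
    and Su :: "nat \<Rightarrow> real \<Rightarrow> real \<Rightarrow> 'h \<Rightarrow> bool"
    and B Pb Emax Eb :: "nat \<Rightarrow> real"
    and alg :: "nat \<Rightarrow> nat \<Rightarrow> real \<Rightarrow> 'h decision"
  assumes N: "N \<ge> 1" and T: "T \<ge> 1" and V: "V > 0" and lam: "lam > 0" and \<delta>: "\<delta> > 0"
    and D: "\<And>n. n < N \<Longrightarrow> prob_space (D n)"
    and B: "\<And>n. n < N \<Longrightarrow> B n > 0"
    and Pb: "\<And>n. n < N \<Longrightarrow> Pb n \<ge> 0"
    and En_bound: "\<And>n g p h. n < N \<Longrightarrow> 0 \<le> g \<Longrightarrow> g \<le> 1 \<Longrightarrow> 0 \<le> p \<Longrightarrow> p \<le> Pb n \<Longrightarrow>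
                     h \<in> space (D n) \<Longrightarrow> 0 \<le> En n g p h \<and> En n g p h \<le> Emax n"
    and Eb: "\<And>n. n < N \<Longrightarrow> Eb n \<ge> 0"
    and alg: "\<And>n. n < N \<Longrightarrow> is_dpp_alg T (Pb n) V lam (B n) (Eb n) (D n) (En n) (Su n) (alg n)"
    and alg_meas: "\<And>n. n < N \<Longrightarrow> alg_measurable T (D n) (En n) (Su n) (alg n)"
    and slater: "\<And>n. n < N \<Longrightarrow> \<exists>pol. feasible_policy T (Pb n) (D n) (En n) (Su n) (Eb n) pol \<and>
                   (\<forall>k. 1 / real T * (\<Sum>t\<in>{k * T..<Suc k * T}. \<integral>\<omega>. pol_E T (En n) pol t \<omega> \<partial>chanM (D n))
                          < Eb n - \<delta>)"
  shows "(limsup (\<lambda>K. ereal (1 / (real K * real N) *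
            (\<Sum>k<K. \<Sum>n<N. \<integral>\<omega>. alg_Q T (Eb n) (En n) (alg n) (k * T) \<omega> \<partial>chanM (D n))))
         \<le> ereal (((\<Sum>n<N. beta2 T (Emax n) (Eb n)) / real N + V * ((\<Sum>n<N. lam * B n) / real N)) / \<delta>)) \<and>
         (limsup (\<lambda>K. ereal (1 / (real K * real T * real N) *
            (\<Sum>k<K. \<Sum>n<N. \<Sum>t\<in>{k * T..<Suc k * T}.
                \<integral>\<omega>. alg_X T (Eb n) (En n) (Su n) lam (B n) (alg n) t \<omega> \<partial>chanM (D n))))
         \<le> ereal ((\<Sum>n<N. beta2 T (Emax n) (Eb n)) / real N / V
                  + (\<Sum>n<N. X_opt T (Pb n) (D n) (En n) (Su n) (Eb n) lam (B n)) / real N))"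
proof -
  have devn: "dev T V lam \<delta> (D n) (En n) (Su n) (B n) (Pb n) (Emax n) (Eb n) (alg n)" if n: "n < N" for n
  proof (rule dev.intro[OF T V lam \<delta> D[OF n] B[OF n] Pb[OF n] _ Eb[OF n] alg[OF n] alg_meas[OF n]])
    fix g p :: real and h
    assume "0 \<le> g" "g \<le> 1" "0 \<le> p" "p \<le> Pb n" "h \<in> space (D n)"
    then show "0 \<le> En n g p h \<and> En n g p h \<le> Emax n" by (rule En_bound[OF n])
  qed
  have R1: "(\<Sum>k<K. \<integral>\<omega>. alg_Q T (Eb n) (En n) (alg n) (k * T) \<omega> \<partial>chanM (D n))
      \<le> real K * ((beta2 T (Emax n) (Eb n) + V * (lam * B n)) / \<delta>)" if n: "n < N" for n K
    using dev.dev_results(1)[OF devn[OF n] slater[OF n], of K] unfolding alg_Q_def .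
  have R2: "(\<Sum>k<K. \<Sum>t\<in>{k * T..<Suc k * T}. \<integral>\<omega>. alg_X T (Eb n) (En n) (Su n) lam (B n) (alg n) t \<omega> \<partial>chanM (D n))
      \<le> real K * real T * (beta2 T (Emax n) (Eb n) / V + X_opt T (Pb n) (D n) (En n) (Su n) (Eb n) lam (B n))"
    if n: "n < N" for n K
    using dev.dev_results(2)[OF devn[OF n] slater[OF n], of K] .
  have Np: "real N > 0" using N by simp
  have Tp: "real T > 0" using T by simp
  have b1: "1 / (real K * real N) *
            (\<Sum>k<K. \<Sum>n<N. \<integral>\<omega>. alg_Q T (Eb n) (En n) (alg n) (k * T) \<omega> \<partial>chanM (D n))
         \<le> ((\<Sum>n<N. beta2 T (Emax n) (Eb n)) / real N + V * ((\<Sum>n<N. lam * B n) / real N)) / \<delta>"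
    if K: "K \<ge> 1" for K
  proof -
    have Kp: "real K > 0" using K by simp
    have "(\<Sum>k<K. \<Sum>n<N. \<integral>\<omega>. alg_Q T (Eb n) (En n) (alg n) (k * T) \<omega> \<partial>chanM (D n))
        = (\<Sum>n<N. \<Sum>k<K. \<integral>\<omega>. alg_Q T (Eb n) (En n) (alg n) (k * T) \<omega> \<partial>chanM (D n))"
      by (rule sum.swap)
    also have "\<dots> \<le> (\<Sum>n<N. real K * ((beta2 T (Emax n) (Eb n) + V * (lam * B n)) / \<delta>))"
      by (rule sum_mono) (use R1 in auto)
    finally show ?thesis
      by (rule avg_h1[OF Np Kp \<delta>, where b="\<lambda>n. beta2 T (Emax n) (Eb n)" and c="\<lambda>n. lam * B n"])
  qed
  have b2: "1 / (real K * real T * real N) *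
            (\<Sum>k<K. \<Sum>n<N. \<Sum>t\<in>{k * T..<Suc k * T}.
                \<integral>\<omega>. alg_X T (Eb n) (En n) (Su n) lam (B n) (alg n) t \<omega> \<partial>chanM (D n))
         \<le> (\<Sum>n<N. beta2 T (Emax n) (Eb n)) / real N / V
                  + (\<Sum>n<N. X_opt T (Pb n) (D n) (En n) (Su n) (Eb n) lam (B n)) / real N"
    if K: "K \<ge> 1" for K
  proof -
    have Kp: "real K > 0" using K by simp
    have "(\<Sum>k<K. \<Sum>n<N. \<Sum>t\<in>{k * T..<Suc k * T}.
                \<integral>\<omega>. alg_X T (Eb n) (En n) (Su n) lam (B n) (alg n) t \<omega> \<partial>chanM (D n))
        = (\<Sum>n<N. \<Sum>k<K. \<Sum>t\<in>{k * T..<Suc k * T}.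
                \<integral>\<omega>. alg_X T (Eb n) (En n) (Su n) lam (B n) (alg n) t \<omega> \<partial>chanM (D n))"
      by (rule sum.swap)
    also have "\<dots> \<le> (\<Sum>n<N. real K * real T * (beta2 T (Emax n) (Eb n) / V + X_opt T (Pb n) (D n) (En n) (Su n) (Eb n) lam (B n)))"
      by (rule sum_mono) (use R2 in auto)
    finally show ?thesis
      by (rule avg_h2[OF Np Kp Tp V, where b="\<lambda>n. beta2 T (Emax n) (Eb n)" and c="\<lambda>n. X_opt T (Pb n) (D n) (En n) (Su n) (Eb n) lam (B n)"])
  qed
  show ?thesis
  proof
    show "limsup (\<lambda>K. ereal (1 / (real K * real N) *
            (\<Sum>k<K. \<Sum>n<N. \<integral>\<omega>. alg_Q T (Eb n) (En n) (alg n) (k * T) \<omega> \<partial>chanM (D n))))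
         \<le> ereal (((\<Sum>n<N. beta2 T (Emax n) (Eb n)) / real N + V * ((\<Sum>n<N. lam * B n) / real N)) / \<delta>)"
      by (rule Limsup_bounded) (use b1 in \<open>auto simp: eventually_sequentially\<close>)
    show "limsup (\<lambda>K. ereal (1 / (real K * real T * real N) *
            (\<Sum>k<K. \<Sum>n<N. \<Sum>t\<in>{k * T..<Suc k * T}.
                \<integral>\<omega>. alg_X T (Eb n) (En n) (Su n) lam (B n) (alg n) t \<omega> \<partial>chanM (D n))))
         \<le> ereal ((\<Sum>n<N. beta2 T (Emax n) (Eb n)) / real N / V
                  + (\<Sum>n<N. X_opt T (Pb n) (D n) (En n) (Su n) (Eb n) lam (B n)) / real N)"
      by (rule Limsup_bounded) (use b2 in \<open>auto simp: eventually_sequentially\<close>)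
  qed
qed

end
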